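(* Let $n\ge1$. Let $\mathbf{R}$ be a subalgebra of $\mathbf{P\L}_n\times\mathbf{P\L}_n$ with $\mathbf{R}\subseteq{\le}$. Assume $\mathbf{R}$ is not the diagonal of a subalgebra of $\mathbf{P\L}_n$. Let $\mathbf{S}=\mathrm{pr}_1(\mathbf{R})\times\mathrm{pr}_2(\mathbf{R})=\mathbf{P\L}_k\times\mathbf{P\L}_{k'}$, where $k,k'$ are divisors of $n$. Then there exists $\overline{\mathbf{R}}\in\mathcal{S}_n$ with $\mathbf{R}=\overline{\mathbf{R}}\cap\mathbf{S}$.
   Context: For $n\ge 1$, the algebra $\mathbf{P\L}_n=\langle\{0,\tfrac1n,\dots,\tfrac{n-1}{n},1\},\wedge,\vee,\odot,\oplus,0,1\rangle$ has $\wedge=\min$, $\vee=\max$, $x\odot y=\max\{0,x+y-1\}$ and $x\oplus y=\min\{1,x+y\}$. For a divisor $k$ of $n$, $\mathbf{P\L}_k$ is the subalgebra with universe $\{\tfrac ik:0\le i\le k\}$. The relations are ${\le}=\{(x,y): x\le y\}$ and $\lhd=\{(x,y):x=0\text{ or }y=1\}$. The set $\mathcal{S}_n$ is the collection of all subalgebras $\mathbf{R}$ of $\mathbf{P\L}_n\times\mathbf{P\L}_n$ with $\lhd\subseteq\mathbf{R}\subseteq{\le}$. *)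

theory Defs
  imports Complex_Main
begin

definition PL :: "nat \<Rightarrow> rat set" where
  "PL n = {of_nat i / of_nat n | i. i \<le> n}"

definition odot :: "rat \<Rightarrow> rat \<Rightarrow> rat" where
  "odot x y = max 0 (x + y - 1)"

definition oplus :: "rat \<Rightarrow> rat \<Rightarrow> rat" where
  "oplus x y = min 1 (x + y)"

definition subalg :: "nat \<Rightarrow> rat set \<Rightarrow> bool" where
  "subalg n A \<longleftrightarrow> A \<subseteq> PL n \<and> 0 \<in> A \<and> 1 \<in> A \<and>
     (\<forall>x\<in>A. \<forall>y\<in>A. min x y \<in> A \<and> max x y \<in> A \<and> odot x y \<in> A \<and> oplus x y \<in> A)"

definition subalg2 :: "nat \<Rightarrow> (rat \<times> rat) set \<Rightarrow> bool" where
  "subalg2 n R \<longleftrightarrow> R \<subseteq> PL n \<times> PL n \<and> (0, 0) \<in> R \<and> (1, 1) \<in> R \<and>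
     (\<forall>(x1, x2)\<in>R. \<forall>(y1, y2)\<in>R.
        (min x1 y1, min x2 y2) \<in> R \<and> (max x1 y1, max x2 y2) \<in> R \<and>
        (odot x1 y1, odot x2 y2) \<in> R \<and> (oplus x1 y1, oplus x2 y2) \<in> R)"

definition leR :: "nat \<Rightarrow> (rat \<times> rat) set" where
  "leR n = {(x, y). x \<in> PL n \<and> y \<in> PL n \<and> x \<le> y}"

definition lhdR :: "nat \<Rightarrow> (rat \<times> rat) set" where
  "lhdR n = {(x, y). x \<in> PL n \<and> y \<in> PL n \<and> (x = 0 \<or> y = 1)}"

definition diag :: "rat set \<Rightarrow> (rat \<times> rat) set" where
  "diag A = {(a, a) | a. a \<in> A}"

definition Sn :: "nat \<Rightarrow> (rat \<times> rat) set set" where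
  "Sn n = {R. subalg2 n R \<and> lhdR n \<subseteq> R \<and> R \<subseteq> leR n}"

end

theory Submission
  imports Defs
begin
lemma PL_odot: assumes "n \<ge> 1" "x \<in> PL n" "y \<in> PL n" shows "odot x y \<in> PL n"
proof -
  obtain i j where i: "x = of_nat i / of_nat n" "i \<le> n" and j: "y = of_nat j / of_nat n" "j \<le> n"
    using assms by (auto simp: PL_def)
  have nz: "(of_nat n::rat) > 0" using assms by simp
  have e: "x + y - 1 = (of_nat i + of_nat j - of_nat n) / of_nat n" using nz i j
    by (simp add: diff_divide_distrib add_divide_distrib)
  show ?thesis
  proof (cases "i + j \<le> n")
    case True
    have "(of_nat i + of_nat j - of_nat n::rat) \<le> 0" using True
      by (metis diff_le_0_iff_le of_nat_add of_nat_le_iff)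
    hence "x + y - 1 \<le> 0" unfolding e using nz by (simp add: divide_nonpos_pos)
    hence "odot x y = of_nat 0 / of_nat n" by (simp add: odot_def)
    thus ?thesis unfolding PL_def by blast
  next
    case False
    have e2: "x + y - 1 = of_nat (i + j - n) / of_nat n" unfolding e using False
      by (simp add: of_nat_diff)
    have "x + y - 1 \<ge> 0" unfolding e2 by simp
    hence "odot x y = of_nat (i + j - n) / of_nat n" using e2 by (simp add: odot_def)
    moreover have "i + j - n \<le> n" using i j by simp
    ultimately show ?thesis unfolding PL_def by blast
  qed
qed

lemma PL_oplus: assumes "n \<ge> 1" "x \<in> PL n" "y \<in> PL n" shows "oplus x y \<in> PL n"
proof -
  obtain i j where i: "x = of_nat i / of_nat n" "i \<le> n" and j: "y = of_nat j / of_nat n" "j \<le> n"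
    using assms by (auto simp: PL_def)
  have nz: "(of_nat n::rat) > 0" using assms by simp
  have e: "x + y = of_nat (i + j) / of_nat n" using i j by (simp add: add_divide_distrib)
  show ?thesis
  proof (cases "i + j \<le> n")
    case True
    have "x + y \<le> 1" unfolding e using True nz by (simp add: divide_le_eq_1)
    hence "oplus x y = of_nat (i + j) / of_nat n" using e by (simp add: oplus_def)
    thus ?thesis using True unfolding PL_def by blast
  next
    case False
    have "x + y \<ge> 1" unfolding e using False nz by (simp add: le_divide_eq_1)
    hence "oplus x y = of_nat n / of_nat n" using nz by (simp add: oplus_def)
    thus ?thesis unfolding PL_def by blast
  qed
qed
lemma PL_range: "x \<in> PL n \<Longrightarrow> 0 \<le> x \<and> x \<le> 1"
  by (auto simp: PL_def divide_le_eq_1)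
lemma odot_mono: "x \<le> a \<Longrightarrow> y \<le> b \<Longrightarrow> odot x y \<le> odot a b"
  by (simp add: odot_def)
lemma oplus_mono: "x \<le> a \<Longrightarrow> y \<le> b \<Longrightarrow> oplus x y \<le> oplus a b"
  by (simp add: oplus_def)

theorem lemma3p14:
  fixes n k k' :: nat and R :: "(rat \<times> rat) set"
  assumes "n \<ge> 1"
    and "subalg2 n R"
    and "R \<subseteq> leR n"
    and "\<not> (\<exists>A. subalg n A \<and> R = diag A)"
    and "k dvd n" and "k' dvd n"
    and "fst ` R = PL k" and "snd ` R = PL k'"
  shows "\<exists>Rb \<in> Sn n. R = Rb \<inter> (fst ` R \<times> snd ` R)"
proof -
  note S = assms(2)[unfolded subalg2_def]
  have RPL: "\<And>a b. (a,b) \<in> R \<Longrightarrow> a \<in> PL n \<and> b \<in> PL n" using S by auto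
  have Rle: "\<And>a b. (a,b) \<in> R \<Longrightarrow> a \<le> b" using assms(3) by (auto simp: leR_def)
  have cl: "\<And>x1 x2 y1 y2. (x1,x2) \<in> R \<Longrightarrow> (y1,y2) \<in> R \<Longrightarrow>
        (min x1 y1, min x2 y2) \<in> R \<and> (max x1 y1, max x2 y2) \<in> R \<and>
        (odot x1 y1, odot x2 y2) \<in> R \<and> (oplus x1 y1, oplus x2 y2) \<in> R"
    using S by fastforce
  have k1: "k \<ge> 1" using assms(1,5) by (metis dvd_0_left_iff not_one_le_zero less_one not_less)
  obtain a b where ab: "(a,b) \<in> R" "a < b"
  proof (rule ccontr)
    assume "\<not> thesis"
    with that have eq: "\<And>a b. (a,b) \<in> R \<Longrightarrow> a = b" using Rle by (meson order.not_eq_order_implies_strict)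
    have "subalg n (fst ` R)"
      unfolding subalg_def
    proof (intro conjI ballI)
      show "fst ` R \<subseteq> PL n" using RPL by auto
      show "0 \<in> fst ` R" using S by force
      show "1 \<in> fst ` R" using S by force
    next
      fix x y assume "x \<in> fst ` R" "y \<in> fst ` R"
      then obtain x' y' where "(x,x') \<in> R" "(y,y') \<in> R" by auto
      with cl[OF this] show "min x y \<in> fst ` R" "max x y \<in> fst ` R"
        "odot x y \<in> fst ` R" "oplus x y \<in> fst ` R" by force+
    qed
    moreover have "R = diag (fst ` R)"
      unfolding diag_def using eq by force
    ultimately show False using assms(4) by blast
  qed
  have "1 - a \<in> PL k"
  proof -
    have "a \<in> PL k" using ab assms(7) by force
    then obtain i where i: "a = of_nat i / of_nat k" "i \<le> k" by (auto simp: PL_def)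
    have "1 - a = of_nat (k - i) / of_nat k" using i k1 by (simp add: field_simps of_nat_diff)
    thus ?thesis by (auto simp: PL_def)
  qed
  then obtain c where c: "(1 - a, c) \<in> R" using assms(7) by force
  have c1: "c \<ge> 1 - a" using Rle[OF c] .
  define d where "d = odot b c"
  have d0: "(0, d) \<in> R" using cl[OF ab(1) c] unfolding d_def by (simp add: odot_def)
  have dpos: "d > 0" using ab c1 unfolding d_def odot_def by simp
  have dPL: "d \<in> PL n" using RPL[OF d0] by simp
  then obtain j where j: "d = of_nat j / of_nat n" by (auto simp: PL_def)
  have j1: "j \<ge> 1" using dpos j by (cases j) auto
  have iter: "\<And>m. (0, min 1 (of_nat (Suc m) * d)) \<in> R"
  proof -
    fix m show "(0, min 1 (of_nat (Suc m) * d)) \<in> R"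
    proof (induction m)
      case 0
      have "d \<le> 1" using PL_range[OF dPL] by simp
      thus ?case using d0 by simp
    next
      case (Suc m)
      have "(oplus 0 0, oplus (min 1 (of_nat (Suc m) * d)) d) \<in> R" using cl[OF Suc d0] by blast
      moreover have "oplus (min 1 (of_nat (Suc m) * d)) d = min 1 (of_nat (Suc (Suc m)) * d)"
        using dpos by (simp add: oplus_def algebra_simps min_def)
      ultimately show ?case by (simp add: oplus_def)
    qed
  qed
  have "of_nat n * d \<ge> 1" using j j1 assms(1) by simp
  then have "min 1 (of_nat (Suc (n - 1)) * d) = 1" using assms(1) by simp
  with iter[of "n - 1"] have R01: "(0, 1) \<in> R" by simp
  define Rb where "Rb = {(x,y). x \<in> PL n \<and> y \<in> PL n \<and> (\<exists>(a,b)\<in>R. x \<le> a \<and> b \<le> y)}"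
  have "Rb \<in> Sn n"
    unfolding Sn_def
  proof (intro CollectI conjI)
    have main: "\<And>x1 x2 y1 y2. (x1,x2) \<in> Rb \<Longrightarrow> (y1,y2) \<in> Rb \<Longrightarrow>
          (min x1 y1, min x2 y2) \<in> Rb \<and> (max x1 y1, max x2 y2) \<in> Rb \<and>
          (odot x1 y1, odot x2 y2) \<in> Rb \<and> (oplus x1 y1, oplus x2 y2) \<in> Rb"
    proof -
      fix x1 x2 y1 y2 assume p: "(x1,x2) \<in> Rb" and q: "(y1,y2) \<in> Rb"
      from p obtain a1 b1 where A: "x1 \<in> PL n" "x2 \<in> PL n" "(a1,b1) \<in> R" "x1 \<le> a1" "b1 \<le> x2"
        unfolding Rb_def by auto
      from q obtain a2 b2 where B: "y1 \<in> PL n" "y2 \<in> PL n" "(a2,b2) \<in> R" "y1 \<le> a2" "b2 \<le> y2"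
        unfolding Rb_def by auto
      note C = cl[OF A(3) B(3)]
      have "(min x1 y1, min x2 y2) \<in> Rb" unfolding Rb_def using A B C
        by (auto intro!: bexI[of _ "(min a1 a2, min b1 b2)"] simp: min_def)
      moreover have "(max x1 y1, max x2 y2) \<in> Rb" unfolding Rb_def using A B C
        by (auto intro!: bexI[of _ "(max a1 a2, max b1 b2)"] simp: max_def)
      moreover have "(odot x1 y1, odot x2 y2) \<in> Rb" unfolding Rb_def using A B C assms(1)
        by (auto intro!: bexI[of _ "(odot a1 a2, odot b1 b2)"] odot_mono PL_odot)
      moreover have "(oplus x1 y1, oplus x2 y2) \<in> Rb" unfolding Rb_def using A B C assms(1)
        by (auto intro!: bexI[of _ "(oplus a1 a2, oplus b1 b2)"] oplus_mono PL_oplus)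
      ultimately show "(min x1 y1, min x2 y2) \<in> Rb \<and> (max x1 y1, max x2 y2) \<in> Rb \<and>
          (odot x1 y1, odot x2 y2) \<in> Rb \<and> (oplus x1 y1, oplus x2 y2) \<in> Rb" by blast
    qed
    have "Rb \<subseteq> PL n \<times> PL n" unfolding Rb_def by auto
    moreover have "(0,0) \<in> Rb" "(1,1) \<in> Rb" unfolding Rb_def using S by force+
    ultimately show "subalg2 n Rb" unfolding subalg2_def using main by blast
    show "lhdR n \<subseteq> Rb"
    proof
      fix p assume "p \<in> lhdR n"
      then obtain x y where p: "p = (x,y)" "x \<in> PL n" "y \<in> PL n" "x = 0 \<or> y = 1"
        unfolding lhdR_def by auto
      show "p \<in> Rb" using p PL_range[OF p(2)] PL_range[OF p(3)] S unfolding Rb_def by force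
    qed
    show "Rb \<subseteq> leR n" unfolding Rb_def leR_def using Rle by fastforce
  qed
  moreover have "R = Rb \<inter> (fst ` R \<times> snd ` R)"
  proof
    show "R \<subseteq> Rb \<inter> (fst ` R \<times> snd ` R)" unfolding Rb_def using RPL by force
  next
    show "Rb \<inter> (fst ` R \<times> snd ` R) \<subseteq> R"
    proof
      fix p assume "p \<in> Rb \<inter> (fst ` R \<times> snd ` R)"
      then obtain x y a b c e where p: "p = (x,y)" "x \<in> PL n" "y \<in> PL n" "(a,b) \<in> R"
        "x \<le> a" "b \<le> y" "(x,c) \<in> R" "(e,y) \<in> R"
        unfolding Rb_def by force
      have x01: "0 \<le> x" using PL_range[OF p(2)] by simp
      have y1: "y \<le> 1" using PL_range[OF p(3)] by simp
      have c1: "c \<le> 1" using PL_range RPL p(7) by blast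
      have b1: "b \<le> 1" using PL_range RPL p(4) by blast
      have e0: "0 \<le> e" using PL_range RPL p(8) by blast
      have "(max x 0, max c 1) \<in> R" using cl[OF p(7) R01] by blast
      hence x1: "(x,1) \<in> R" using x01 c1 by (simp add: max_def)
      have "(min a x, min b 1) \<in> R" using cl[OF p(4) x1] by blast
      hence xb: "(x,b) \<in> R" using p(5) b1 by (simp add: min_absorb2)
      have "(min e 0, min y 1) \<in> R" using cl[OF p(8) R01] by blast
      hence zy: "(0,y) \<in> R" using e0 y1 by (simp add: min_absorb2 min_absorb1)
      have "(max x 0, max b y) \<in> R" using cl[OF xb zy] by blast
      thus "p \<in> R" using p(1,6) x01 by (simp add: max_def)
    qed
  qed
  ultimately show ?thesis by blast
qed

end
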